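(* Let $\theta_0\in\mathbb{R}$ and let $\hat\theta_u,\hat\theta_b$ be real random variables with finite second moments such that $\mathbb{E}[\hat\theta_u]=\theta_0$ and $\mathbb{E}[\hat\theta_b]=\theta_0+\mu$ for some (arbitrary) $\mu\in\mathbb{R}$. Write $\sigma^2_u=\mathrm{Var}(\hat\theta_u)$, $\sigma^2_b=\mathrm{Var}(\hat\theta_b)$, $\sigma_{bu}=\mathrm{Cov}(\hat\theta_b,\hat\theta_u)$, and assume $\sigma^2_u>0$ and $\sigma^2_u+\sigma^2_b-2\sigma_{bu}>0$. Suppose the variances and covariance are known, and define $$\hat\lambda=\frac{\sigma^2_u-\sigma_{bu}}{(\hat\theta_u-\hat\theta_b)^2+\sigma^2_u+\sigma^2_b-2\sigma_{bu}},\qquad \hat\theta_{\hat\lambda}=\hat\lambda\hat\theta_b+(1-\hat\lambda)\hat\theta_u.$$ Let $c=\sigma_b/\sigma_u$ and $\rho=\sigma_{bu}/\sqrt{\sigma^2_u\sigma^2_b}$, with $\rho=0$ if $\sigma^2_b=0$. Then $$\mathbb{E}\big[(\hat\theta_{\hat\lambda}-\theta_0)^2\big]\le \sigma^2_u\left(1+\frac12\,\frac{|1-\rho c|}{\sqrt{1-2\rho c+c^2}}\right)^2 .$$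
   Context: $\hat\theta_u$ is an unbiased estimator of $\theta_0$ and $\hat\theta_b$ is a possibly biased estimator with unknown bias $\mu$; $\hat\theta_{\hat\lambda}$ is the combination estimator. $\sigma_u,\sigma_b$ denote the nonnegative square roots of $\sigma^2_u,\sigma^2_b$. *)

theory Defs
  imports "HOL-Probability.Probability"
begin

definition (in prob_space) covariance :: "('a \<Rightarrow> real) \<Rightarrow> ('a \<Rightarrow> real) \<Rightarrow> real" where
  "covariance X Y = expectation (\<lambda>x. (X x - expectation X) * (Y x - expectation Y))"

end

theory Submission
  imports Defs
begin

lemma abs_ratio_bound:
  fixes s D v :: real
  assumes "v > 0"
  shows "\<bar>s / (D\<^sup>2 + v) * D\<bar> \<le> \<bar>s\<bar> / (2 * sqrt v)"
proof -
  have sv: "sqrt v > 0" using assms by simp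
  have "0 \<le> (\<bar>D\<bar> - sqrt v)\<^sup>2" by simp
  hence key: "2 * sqrt v * \<bar>D\<bar> \<le> D\<^sup>2 + v"
    using assms by (simp add: power2_eq_square algebra_simps)
  have pos: "D\<^sup>2 + v > 0" using assms by (simp add: add_nonneg_pos)
  have "\<bar>s / (D\<^sup>2 + v) * D\<bar> = \<bar>s\<bar> * \<bar>D\<bar> / (D\<^sup>2 + v)"
    using pos by (simp add: abs_mult)
  also have "\<dots> \<le> \<bar>s\<bar> / (2 * sqrt v)"
    using pos sv key
    by (simp add: divide_simps) (metis abs_ge_zero mult.assoc mult.commute mult_left_mono)
  finally show ?thesis .
qed

lemma pointwise_bound:
  fixes X Y K \<sigma> :: real
  assumes "\<sigma> > 0" "\<bar>Y\<bar> \<le> K"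
  shows "(X - Y)\<^sup>2 \<le> X\<^sup>2 * (1 + K / \<sigma>) + K * \<sigma> + K\<^sup>2"
proof -
  have K0: "K \<ge> 0" using assms by linarith
  have "(X - Y)\<^sup>2 \<le> (\<bar>X\<bar> + K)\<^sup>2"
  proof -
    have "\<bar>X - Y\<bar> \<le> \<bar>X\<bar> + K" using assms by linarith
    thus ?thesis by (metis abs_ge_zero power2_abs power_mono)
  qed
  also have "\<dots> = X\<^sup>2 + K * (2 * \<bar>X\<bar>) + K\<^sup>2"
    by (simp add: power2_eq_square algebra_simps)
  also have "\<dots> \<le> X\<^sup>2 + K * (X\<^sup>2 / \<sigma> + \<sigma>) + K\<^sup>2"
  proof -
    have "0 \<le> (\<bar>X\<bar> - \<sigma>)\<^sup>2" by simp
    hence "2 * \<bar>X\<bar> * \<sigma> \<le> X\<^sup>2 + \<sigma>\<^sup>2" by (simp add: power2_eq_square algebra_simps)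
    hence "2 * \<bar>X\<bar> \<le> X\<^sup>2 / \<sigma> + \<sigma>" using assms
      by (simp add: field_simps power2_eq_square)
    thus ?thesis using K0 by (simp add: mult_left_mono)
  qed
  also have "\<dots> = X\<^sup>2 * (1 + K / \<sigma>) + K * \<sigma> + K\<^sup>2"
    using assms by (simp add: field_simps)
  finally show ?thesis .
qed

theorem theorem2:
  fixes M :: "'a measure" and U B :: "'a \<Rightarrow> real" and \<theta>0 \<mu> :: real
  assumes "prob_space M"
    and "U \<in> borel_measurable M" and "B \<in> borel_measurable M"
    and "integrable M (\<lambda>x. (U x)\<^sup>2)" and "integrable M (\<lambda>x. (B x)\<^sup>2)"
    and "prob_space.expectation M U = \<theta>0"
    and "prob_space.expectation M B = \<theta>0 + \<mu>"
    and "prob_space.variance M U > 0"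
    and "prob_space.variance M U + prob_space.variance M B
           - 2 * prob_space.covariance M B U > 0"
  shows
   "let su2 = prob_space.variance M U; sb2 = prob_space.variance M B;
        sbu = prob_space.covariance M B U;
        lam = (\<lambda>x. (su2 - sbu) / ((U x - B x)\<^sup>2 + su2 + sb2 - 2 * sbu));
        est = (\<lambda>x. lam x * B x + (1 - lam x) * U x);
        c = sqrt sb2 / sqrt su2;
        \<rho> = (if sb2 = 0 then 0 else sbu / sqrt (su2 * sb2))
    in prob_space.expectation M (\<lambda>x. (est x - \<theta>0)\<^sup>2)
       \<le> su2 * (1 + (1/2) * \<bar>1 - \<rho> * c\<bar> / sqrt (1 - 2 * \<rho> * c + c\<^sup>2))\<^sup>2"
proof -
  interpret P: prob_space M by fact
  note meas[measurable] = assms(2,3)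
  define su2 where "su2 = P.variance U"
  define sb2 where "sb2 = P.variance B"
  define sbu where "sbu = P.covariance B U"
  define s where "s = su2 - sbu"
  define v where "v = su2 + sb2 - 2 * sbu"
  define \<sigma> where "\<sigma> = sqrt su2"
  define K where "K = \<bar>s\<bar> / (2 * sqrt v)"
  have su2p: "su2 > 0" using assms(8) su2_def by simp
  have vp: "v > 0" using assms(9) unfolding v_def su2_def sb2_def sbu_def by simp
  have \<sigma>p: "\<sigma> > 0" using su2p \<sigma>_def by simp
  have sb2nn: "sb2 \<ge> 0" unfolding sb2_def by (rule integral_nonneg_AE) simp
  have intU: "integrable M U"
    by (rule P.square_integrable_imp_integrable[OF assms(2) assms(4)])
  have intB: "integrable M B"
    by (rule P.square_integrable_imp_integrable[OF assms(3) assms(5)])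
  have intX: "integrable M (\<lambda>x. (U x - \<theta>0)\<^sup>2)"
    using assms(4) intU by (simp add: power2_diff)
  have intXBm: "integrable M (\<lambda>x. (B x - m)\<^sup>2)" for m
    using assms(5) intB by (simp add: power2_diff)
  have intXB: "integrable M (\<lambda>x. (B x - P.expectation B)\<^sup>2)"
    by (rule intXBm)
  have EX2: "P.expectation (\<lambda>x. (U x - \<theta>0)\<^sup>2) = su2"
    unfolding su2_def using assms(6) by simp
  have sbu0: "sbu = 0" if "sb2 = 0"
  proof -
    have "AE x in M. (B x - P.expectation B)\<^sup>2 = 0"
      using that intXB unfolding sb2_def
      by (subst (asm) integral_nonneg_eq_0_iff_AE) auto
    hence "AE x in M. (B x - P.expectation B) * (U x - P.expectation U) = 0"
      by eventually_elim simp
    hence "P.covariance B U = P.expectation (\<lambda>x. 0)"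
      unfolding P.covariance_def by (intro integral_cong_AE) auto
    thus ?thesis unfolding sbu_def by simp
  qed
  define c where "c = sqrt sb2 / sqrt su2"
  define \<rho> where "\<rho> = (if sb2 = 0 then 0 else sbu / sqrt (su2 * sb2))"
  have rc: "\<rho> * c = sbu / su2"
  proof (cases "sb2 = 0")
    case True thus ?thesis using sbu0 by (simp add: \<rho>_def)
  next
    case False
    hence "sqrt sb2 > 0" using sb2nn by simp
    thus ?thesis using su2p unfolding \<rho>_def c_def using False
      by (simp add: real_sqrt_mult field_simps)
  qed
  have c2: "c\<^sup>2 = sb2 / su2" unfolding c_def using sb2nn su2p
    by (simp add: power_divide)
  have RHS: "su2 * (1 + (1/2) * \<bar>1 - \<rho> * c\<bar> / sqrt (1 - 2 * \<rho> * c + c\<^sup>2))\<^sup>2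
      = su2 * (1 + K / \<sigma>) + K * \<sigma> + K\<^sup>2"
  proof -
    have e1: "1 - \<rho> * c = s / su2" using su2p rc s_def by (simp add: field_simps)
    have e2: "1 - 2 * \<rho> * c + c\<^sup>2 = v / su2" using su2p rc c2 v_def by (simp add: field_simps)
    have e3: "sqrt (v / su2) = sqrt v / \<sigma>" by (simp add: \<sigma>_def real_sqrt_divide)
    have sv: "sqrt v > 0" using vp by simp
    have h: "(1/2) * \<bar>1 - \<rho> * c\<bar> / sqrt (1 - 2 * \<rho> * c + c\<^sup>2) = K / \<sigma>"
      unfolding e1 e2 e3 K_def using su2p \<sigma>p sv
      by (simp add: \<sigma>_def field_simps abs_div)
    have su: "su2 = \<sigma>\<^sup>2" using su2p \<sigma>_def by simp
    have "su2 * (1 + (1/2) * \<bar>1 - \<rho> * c\<bar> / sqrt (1 - 2 * \<rho> * c + c\<^sup>2))\<^sup>2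
        = \<sigma>\<^sup>2 * (1 + K / \<sigma>)\<^sup>2" by (simp only: h su)
    also have "\<dots> = \<sigma>\<^sup>2 * (1 + K / \<sigma>) + K * \<sigma> + K\<^sup>2"
      using \<sigma>p by (simp add: power2_eq_square field_simps)
    finally show ?thesis using su by simp
  qed
  define est where "est = (\<lambda>x. (s / ((U x - B x)\<^sup>2 + su2 + sb2 - 2 * sbu)) * B x
      + (1 - s / ((U x - B x)\<^sup>2 + su2 + sb2 - 2 * sbu)) * U x)"
  have pw: "(est x - \<theta>0)\<^sup>2 \<le> (U x - \<theta>0)\<^sup>2 * (1 + K / \<sigma>) + K * \<sigma> + K\<^sup>2" for x
  proof -
    have gen: "L * b + (1 - L) * u - t = (u - t) - L * (u - b)" for L b u t :: real
      by algebra
    have dd: "(U x - B x)\<^sup>2 + su2 + sb2 - 2 * sbu = (U x - B x)\<^sup>2 + v"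
      by (simp add: v_def)
    have "est x - \<theta>0 = (U x - \<theta>0) - s / ((U x - B x)\<^sup>2 + v) * (U x - B x)"
      unfolding est_def dd by (rule gen)
    moreover have "\<bar>s / ((U x - B x)\<^sup>2 + v) * (U x - B x)\<bar> \<le> K"
      unfolding K_def by (rule abs_ratio_bound[OF vp])
    ultimately show ?thesis using pointwise_bound[OF \<sigma>p, of "s / ((U x - B x)\<^sup>2 + v) * (U x - B x)" K "U x - \<theta>0"]
      by (simp only:)
  qed
  have fin: "P.expectation (\<lambda>x. (est x - \<theta>0)\<^sup>2)
      \<le> P.expectation (\<lambda>x. (U x - \<theta>0)\<^sup>2 * (1 + K / \<sigma>) + K * \<sigma> + K\<^sup>2)"
  proof (rule integral_mono')
    show "integrable M (\<lambda>x. (U x - \<theta>0)\<^sup>2 * (1 + K / \<sigma>) + K * \<sigma> + K\<^sup>2)"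
      using intX by simp
    show "(est x - \<theta>0)\<^sup>2 \<le> (U x - \<theta>0)\<^sup>2 * (1 + K / \<sigma>) + K * \<sigma> + K\<^sup>2" for x by (rule pw)
    show "0 \<le> (U x - \<theta>0)\<^sup>2 * (1 + K / \<sigma>) + K * \<sigma> + K\<^sup>2" for x
      using \<sigma>p vp unfolding K_def by (intro add_nonneg_nonneg mult_nonneg_nonneg) auto
  qed
  also have "\<dots> = su2 * (1 + K / \<sigma>) + K * \<sigma> + K\<^sup>2"
    using intX EX2 P.prob_space by simp
  finally have fin2: "P.expectation (\<lambda>x. (est x - \<theta>0)\<^sup>2)
      \<le> su2 * (1 + (1/2) * \<bar>1 - \<rho> * c\<bar> / sqrt (1 - 2 * \<rho> * c + c\<^sup>2))\<^sup>2"
    using RHS by simp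
  show ?thesis
    using fin2 unfolding Let_def est_def c_def \<rho>_def s_def su2_def sb2_def sbu_def .
qed

end
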